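(* Let $M$ be a finite abelian group of exponent greater than $2$ and let $f$ be a half-automorphism of $L_M$. Then there exist a unique $f'\in\mathrm{Aut}(K)$ and elements $x,y\in M$ with $x^2=y^2=1$ such that $f(A,1)=(f'(A),\alpha_{(x,y)}(A))$ for every $A\in K$.
   Context: Let $K=\{1,a,b,c\}$ be the Klein four-group. Set $L_M=K\times M$ with the operation $(A,x)*(B,y)=(AB,xy)$ if $B=1$, and $(A,x)*(B,y)=(AB,x^{-1}y)$ if $B\neq 1$. For $x,y\in M$ with $x^2=y^2=1$, $\alpha_{(x,y)}:K\to M$ is the map $\alpha_{(x,y)}(1)=1$, $\alpha_{(x,y)}(a)=x$, $\alpha_{(x,y)}(b)=y$, $\alpha_{(x,y)}(c)=xy$. A half-automorphism of a loop $L$ is a bijection $f:L\to L$ such that $f(XY)\in\{f(X)f(Y),f(Y)f(X)\}$ for all $X,Y\in L$. *)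

theory Defs
  imports "HOL-Algebra.Multiplicative_Group"
begin

definition group_exponent :: "('a, 'b) monoid_scheme \<Rightarrow> nat" where
  "group_exponent G = Lcm (group.ord G ` carrier G)"

datatype klein = K1 | Ka | Kb | Kc

fun kmult :: "klein \<Rightarrow> klein \<Rightarrow> klein" where
  "kmult K1 y = y"
| "kmult x K1 = x"
| "kmult Ka Ka = K1" | "kmult Kb Kb = K1" | "kmult Kc Kc = K1"
| "kmult Ka Kb = Kc" | "kmult Kb Ka = Kc"
| "kmult Ka Kc = Kb" | "kmult Kc Ka = Kb"
| "kmult Kb Kc = Ka" | "kmult Kc Kb = Ka"

definition klein_aut :: "(klein \<Rightarrow> klein) \<Rightarrow> bool" where
  "klein_aut g \<longleftrightarrow> bij g \<and> (\<forall>A B. g (kmult A B) = kmult (g A) (g B))"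

definition LM_mult :: "('a, 'b) monoid_scheme \<Rightarrow> klein \<times> 'a \<Rightarrow> klein \<times> 'a \<Rightarrow> klein \<times> 'a" where
  "LM_mult M X Y = (case X of (A, x) \<Rightarrow> case Y of (B, y) \<Rightarrow>
     if B = K1 then (kmult A B, x \<otimes>\<^bsub>M\<^esub> y)
     else (kmult A B, inv\<^bsub>M\<^esub> x \<otimes>\<^bsub>M\<^esub> y))"

definition LM_carrier :: "('a, 'b) monoid_scheme \<Rightarrow> (klein \<times> 'a) set" where
  "LM_carrier M = (UNIV :: klein set) \<times> carrier M"

definition half_aut_LM :: "('a, 'b) monoid_scheme \<Rightarrow> (klein \<times> 'a \<Rightarrow> klein \<times> 'a) \<Rightarrow> bool" where
  "half_aut_LM M f \<longleftrightarrow> bij_betw f (LM_carrier M) (LM_carrier M) \<and>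
     (\<forall>X\<in>LM_carrier M. \<forall>Y\<in>LM_carrier M.
        f (LM_mult M X Y) = LM_mult M (f X) (f Y) \<or> f (LM_mult M X Y) = LM_mult M (f Y) (f X))"

fun alpha :: "('a, 'b) monoid_scheme \<Rightarrow> 'a \<Rightarrow> 'a \<Rightarrow> klein \<Rightarrow> 'a" where
  "alpha M x y K1 = \<one>\<^bsub>M\<^esub>"
| "alpha M x y Ka = x"
| "alpha M x y Kb = y"
| "alpha M x y Kc = x \<otimes>\<^bsub>M\<^esub> y"

end

theory Submission
  imports Defs
begin

lemma kmult_K1r[simp]: "kmult A K1 = A" by (cases A) auto
lemma kmult_self[simp]: "kmult A A = K1" by (cases A) auto
lemma kmult_comm: "kmult A B = kmult B A" by (cases A; cases B) auto
lemma kmult_K1_iff: "kmult A B = K1 \<longleftrightarrow> A = B" by (cases A; cases B) auto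
lemma klein_UNIV: "(UNIV :: klein set) = {K1, Ka, Kb, Kc}"
  using klein.exhaust by auto

lemma LM_mult_simp[simp]:
  "LM_mult M (A,x) (B,y) = (kmult A B, if B = K1 then x \<otimes>\<^bsub>M\<^esub> y else inv\<^bsub>M\<^esub> x \<otimes>\<^bsub>M\<^esub> y)"
  by (simp add: LM_mult_def)

lemma LM_carrier_iff[simp]: "(A,x) \<in> LM_carrier M \<longleftrightarrow> x \<in> carrier M"
  by (simp add: LM_carrier_def)

lemma two_cases: "a \<in> {s,t} \<Longrightarrow> b \<in> {s,t} \<Longrightarrow> a \<noteq> b \<Longrightarrow> (a = s \<and> b = t) \<or> (a = t \<and> b = s)"
  by auto

lemma (in comm_group) aux1: "a \<in> carrier G \<Longrightarrow> b \<in> carrier G \<Longrightarrow> (inv a \<otimes> b) \<otimes> (inv b \<otimes> a) = \<one>"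
  by (metis inv_closed m_assoc m_closed m_comm r_inv r_one)
lemma (in comm_group) aux2: "a \<in> carrier G \<Longrightarrow> b \<in> carrier G \<Longrightarrow> (a \<otimes> b) \<otimes> (inv b \<otimes> a) = a \<otimes> a"
  by (metis inv_closed m_assoc m_closed r_inv r_one)

theorem corollary4p7:
  fixes M :: "('a, 'b) monoid_scheme" and f :: "klein \<times> 'a \<Rightarrow> klein \<times> 'a"
  assumes "comm_group M" and "finite (carrier M)" and "group_exponent M > 2"
    and "half_aut_LM M f"
  shows "\<exists>!f'. klein_aut f' \<and>
           (\<exists>x\<in>carrier M. \<exists>y\<in>carrier M. x \<otimes>\<^bsub>M\<^esub> x = \<one>\<^bsub>M\<^esub> \<and> y \<otimes>\<^bsub>M\<^esub> y = \<one>\<^bsub>M\<^esub> \<and>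
              (\<forall>A. f (A, \<one>\<^bsub>M\<^esub>) = (f' A, alpha M x y A)))"
proof -
  interpret G: comm_group M by fact
  have bij: "bij_betw f (LM_carrier M) (LM_carrier M)"
    and hp: "\<forall>X\<in>LM_carrier M. \<forall>Y\<in>LM_carrier M.
        f (LM_mult M X Y) = LM_mult M (f X) (f Y) \<or> f (LM_mult M X Y) = LM_mult M (f Y) (f X)"
    using assms(4) unfolding half_aut_LM_def by auto
  define p where "p A x = fst (f (A,x))" for A x
  define q where "q A x = snd (f (A,x))" for A x
  have fpq: "f (A,x) = (p A x, q A x)" for A x by (simp add: p_def q_def)
  have qC: "x \<in> carrier M \<Longrightarrow> q A x \<in> carrier M" for A x
  proof -
    assume "x \<in> carrier M"
    hence "f (A,x) \<in> LM_carrier M" using bij bij_betwE by fastforce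
    thus ?thesis by (simp add: fpq)
  qed
  have inj: "x \<in> carrier M \<Longrightarrow> y \<in> carrier M \<Longrightarrow> f (A,x) = f (B,y) \<Longrightarrow> A = B \<and> x = y" for A B x y
    using bij_betw_imp_inj_on[OF bij] unfolding inj_on_def by fastforce
  have H: "x \<in> carrier M \<Longrightarrow> y \<in> carrier M \<Longrightarrow>
     f (kmult A B, if B = K1 then x \<otimes>\<^bsub>M\<^esub> y else inv\<^bsub>M\<^esub> x \<otimes>\<^bsub>M\<^esub> y) \<in>
      {(kmult (p A x) (p B y), if p B y = K1 then q A x \<otimes>\<^bsub>M\<^esub> q B y else inv\<^bsub>M\<^esub> (q A x) \<otimes>\<^bsub>M\<^esub> q B y),
       (kmult (p B y) (p A x), if p A x = K1 then q B y \<otimes>\<^bsub>M\<^esub> q A x else inv\<^bsub>M\<^esub> (q B y) \<otimes>\<^bsub>M\<^esub> q A x)}"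
    for A B x y
  proof -
    assume x: "x \<in> carrier M" and y: "y \<in> carrier M"
    have "f (LM_mult M (A,x) (B,y)) = LM_mult M (f (A,x)) (f (B,y)) \<or>
          f (LM_mult M (A,x) (B,y)) = LM_mult M (f (B,y)) (f (A,x))"
      using bspec[OF bspec[OF hp, of "(A,x)"], of "(B,y)"] x y by simp
    thus ?thesis by (simp add: fpq)
  qed
  have e: "f (K1, \<one>\<^bsub>M\<^esub>) = (K1, \<one>\<^bsub>M\<^esub>)"
  proof -
    have h: "f (K1, \<one>\<^bsub>M\<^esub>) \<in> {(kmult (p K1 \<one>\<^bsub>M\<^esub>) (p K1 \<one>\<^bsub>M\<^esub>),
        if p K1 \<one>\<^bsub>M\<^esub> = K1 then q K1 \<one>\<^bsub>M\<^esub> \<otimes>\<^bsub>M\<^esub> q K1 \<one>\<^bsub>M\<^esub>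
        else inv\<^bsub>M\<^esub> (q K1 \<one>\<^bsub>M\<^esub>) \<otimes>\<^bsub>M\<^esub> q K1 \<one>\<^bsub>M\<^esub>)}"
      using H[of "\<one>\<^bsub>M\<^esub>" "\<one>\<^bsub>M\<^esub>" K1 K1] by simp
    have p1: "p K1 \<one>\<^bsub>M\<^esub> = K1"
    proof (rule ccontr)
      assume "p K1 \<one>\<^bsub>M\<^esub> \<noteq> K1"
      with h show False by (simp add: fpq)
    qed
    have "q K1 \<one>\<^bsub>M\<^esub> = q K1 \<one>\<^bsub>M\<^esub> \<otimes>\<^bsub>M\<^esub> q K1 \<one>\<^bsub>M\<^esub>"
      using h p1 by (simp add: fpq)
    hence "q K1 \<one>\<^bsub>M\<^esub> = \<one>\<^bsub>M\<^esub>"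
      using G.l_cancel_one' qC[of "\<one>\<^bsub>M\<^esub>" K1] by simp
    thus ?thesis using p1 by (simp add: fpq)
  qed
  obtain y where yC: "y \<in> carrier M" and y2: "y \<otimes>\<^bsub>M\<^esub> y \<noteq> \<one>\<^bsub>M\<^esub>"
  proof -
    have "\<exists>y\<in>carrier M. y \<otimes>\<^bsub>M\<^esub> y \<noteq> \<one>\<^bsub>M\<^esub>"
    proof (rule ccontr)
      assume "\<not> ?thesis"
      hence all: "\<forall>y\<in>carrier M. y \<otimes>\<^bsub>M\<^esub> y = \<one>\<^bsub>M\<^esub>" by blast
      have "\<forall>y\<in>carrier M. G.ord y dvd 2"
      proof
        fix z assume z: "z \<in> carrier M"
        have "z [^]\<^bsub>M\<^esub> (2::nat) = z \<otimes>\<^bsub>M\<^esub> z"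
          using z by (simp add: numeral_2_eq_2)
        thus "G.ord z dvd 2" using all z G.pow_eq_id[OF z, of 2] by simp
      qed
      hence "group_exponent M dvd 2" unfolding group_exponent_def
        by (auto intro: Lcm_least)
      hence "group_exponent M \<le> 2" by (simp add: dvd_imp_le)
      with assms(3) show False by simp
    qed
    thus ?thesis using that by blast
  qed
  have yinv: "y \<noteq> inv\<^bsub>M\<^esub> y"
  proof
    assume "y = inv\<^bsub>M\<^esub> y"
    hence "y \<otimes>\<^bsub>M\<^esub> y = \<one>\<^bsub>M\<^esub>" using yC by (metis G.r_inv)
    with y2 show False by simp
  qed
  have iyC: "inv\<^bsub>M\<^esub> y \<in> carrier M" using yC by simp
  define w where "w = q K1 y"
  have wC: "w \<in> carrier M" using qC yC w_def by simp
  have py: "p K1 y = K1"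
  proof (rule ccontr)
    assume P: "p K1 y \<noteq> K1"
    have "f (K1, y \<otimes>\<^bsub>M\<^esub> y) \<in> {(K1, inv\<^bsub>M\<^esub> w \<otimes>\<^bsub>M\<^esub> w)}"
      using H[OF yC yC, of K1 K1] P by (simp add: w_def)
    hence "f (K1, y \<otimes>\<^bsub>M\<^esub> y) = f (K1, \<one>\<^bsub>M\<^esub>)" using e wC by simp
    hence "y \<otimes>\<^bsub>M\<^esub> y = \<one>\<^bsub>M\<^esub>" using inj yC by blast
    with y2 show False by simp
  qed
  have fy: "f (K1, y) = (K1, w)" using py by (simp add: fpq w_def)
  have pne: "B \<noteq> K1 \<Longrightarrow> m \<in> carrier M \<Longrightarrow> p B m \<noteq> K1" for B m
  proof
    assume B: "B \<noteq> K1" and m: "m \<in> carrier M" and P: "p B m = K1"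
    define z where "z = q B m"
    have zC: "z \<in> carrier M" using qC m z_def by simp
    have 1: "f (B, m \<otimes>\<^bsub>M\<^esub> y) = (K1, z \<otimes>\<^bsub>M\<^esub> w)"
      using H[OF m yC, of B K1] P py by (auto simp: z_def w_def G.m_comm qC[OF m] qC[OF yC])
    have 2: "f (B, inv\<^bsub>M\<^esub> y \<otimes>\<^bsub>M\<^esub> m) = (K1, z \<otimes>\<^bsub>M\<^esub> w)"
      using H[OF yC m, of K1 B] P py B by (auto simp: z_def w_def G.m_comm qC[OF m] qC[OF yC])
    have "m \<otimes>\<^bsub>M\<^esub> y = inv\<^bsub>M\<^esub> y \<otimes>\<^bsub>M\<^esub> m" using inj[of "m \<otimes>\<^bsub>M\<^esub> y" "inv\<^bsub>M\<^esub> y \<otimes>\<^bsub>M\<^esub> m" B B] 1 2 m yC iyC by simp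
    hence "m \<otimes>\<^bsub>M\<^esub> y = m \<otimes>\<^bsub>M\<^esub> inv\<^bsub>M\<^esub> y" using m iyC G.m_comm[OF iyC m] by simp
    hence "y = inv\<^bsub>M\<^esub> y" by (metis G.m_comm G.right_cancel m yC iyC)
    with yinv show False by simp
  qed
  define f' where "f' A = p A \<one>\<^bsub>M\<^esub>" for A
  have hom: "f' (kmult A B) = kmult (f' A) (f' B)" for A B
    using H[of "\<one>\<^bsub>M\<^esub>" "\<one>\<^bsub>M\<^esub>" A B]
    by (auto simp: f'_def fpq kmult_comm split: if_splits)
  have sq: "C \<noteq> K1 \<Longrightarrow> q C \<one>\<^bsub>M\<^esub> \<otimes>\<^bsub>M\<^esub> q C \<one>\<^bsub>M\<^esub> = \<one>\<^bsub>M\<^esub>" for C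
  proof -
    assume C: "C \<noteq> K1"
    obtain A B where A: "A \<noteq> K1" and B: "B \<noteq> K1" and AB: "kmult A B = C"
    proof (cases C)
      case K1 with C show ?thesis by simp
    next
      case Ka thus ?thesis using that[of Kb Kc] by simp
    next
      case Kb thus ?thesis using that[of Ka Kc] by simp
    next
      case Kc thus ?thesis using that[of Ka Kb] by simp
    qed
    have BA: "kmult B A = C" using AB kmult_comm by metis
    define u where "u = q A \<one>\<^bsub>M\<^esub>"
    define Q where "Q = q B y"
    define z where "z = q C \<one>\<^bsub>M\<^esub>"
    have uC: "u \<in> carrier M" using qC u_def by simp
    have QC: "Q \<in> carrier M" using qC yC Q_def by simp
    have zC: "z \<in> carrier M" using qC z_def by simp
    have pA: "p A \<one>\<^bsub>M\<^esub> \<noteq> K1" using pne A by simp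
    have pB: "p B y \<noteq> K1" using pne B yC by simp
    have pC: "p C \<one>\<^bsub>M\<^esub> \<noteq> K1" using pne C by simp
    have a1: "f (C, y) \<in> {(kmult (p A \<one>\<^bsub>M\<^esub>) (p B y), inv\<^bsub>M\<^esub> u \<otimes>\<^bsub>M\<^esub> Q),
                           (kmult (p B y) (p A \<one>\<^bsub>M\<^esub>), inv\<^bsub>M\<^esub> Q \<otimes>\<^bsub>M\<^esub> u)}"
      using H[OF G.one_closed yC, of A B] AB B pA pB yC by (simp add: u_def Q_def)
    have a2: "f (C, inv\<^bsub>M\<^esub> y) \<in> {(kmult (p A \<one>\<^bsub>M\<^esub>) (p B y), inv\<^bsub>M\<^esub> u \<otimes>\<^bsub>M\<^esub> Q),
                           (kmult (p B y) (p A \<one>\<^bsub>M\<^esub>), inv\<^bsub>M\<^esub> Q \<otimes>\<^bsub>M\<^esub> u)}"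
      using H[OF yC G.one_closed, of B A] BA A pA pB yC by (auto simp: u_def Q_def)
    have ne: "f (C, y) \<noteq> f (C, inv\<^bsub>M\<^esub> y)" using inj yC iyC yinv by blast
    have s1: "q C y \<otimes>\<^bsub>M\<^esub> q C (inv\<^bsub>M\<^esub> y) = \<one>\<^bsub>M\<^esub>"
    proof -
      have X: "(inv\<^bsub>M\<^esub> u \<otimes>\<^bsub>M\<^esub> Q) \<otimes>\<^bsub>M\<^esub> (inv\<^bsub>M\<^esub> Q \<otimes>\<^bsub>M\<^esub> u) = \<one>\<^bsub>M\<^esub>"
        using uC QC by (rule G.aux1)
      have Y: "(inv\<^bsub>M\<^esub> Q \<otimes>\<^bsub>M\<^esub> u) \<otimes>\<^bsub>M\<^esub> (inv\<^bsub>M\<^esub> u \<otimes>\<^bsub>M\<^esub> Q) = \<one>\<^bsub>M\<^esub>"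
        using X uC QC by (simp add: G.m_comm)
      from two_cases[OF a1 a2 ne] X Y show ?thesis by (auto simp: fpq)
    qed
    have b1: "f (C, y) \<in> {(p C \<one>\<^bsub>M\<^esub>, z \<otimes>\<^bsub>M\<^esub> w), (p C \<one>\<^bsub>M\<^esub>, inv\<^bsub>M\<^esub> w \<otimes>\<^bsub>M\<^esub> z)}"
      using H[OF G.one_closed yC, of C K1] py pC yC by (simp add: z_def w_def)
    have b2: "f (C, inv\<^bsub>M\<^esub> y) \<in> {(p C \<one>\<^bsub>M\<^esub>, z \<otimes>\<^bsub>M\<^esub> w), (p C \<one>\<^bsub>M\<^esub>, inv\<^bsub>M\<^esub> w \<otimes>\<^bsub>M\<^esub> z)}"
      using H[OF yC G.one_closed, of K1 C] py pC yC C by (auto simp: z_def w_def)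
    have s2: "q C y \<otimes>\<^bsub>M\<^esub> q C (inv\<^bsub>M\<^esub> y) = z \<otimes>\<^bsub>M\<^esub> z"
    proof -
      have X: "(z \<otimes>\<^bsub>M\<^esub> w) \<otimes>\<^bsub>M\<^esub> (inv\<^bsub>M\<^esub> w \<otimes>\<^bsub>M\<^esub> z) = z \<otimes>\<^bsub>M\<^esub> z"
        using zC wC by (rule G.aux2)
      have Y: "(inv\<^bsub>M\<^esub> w \<otimes>\<^bsub>M\<^esub> z) \<otimes>\<^bsub>M\<^esub> (z \<otimes>\<^bsub>M\<^esub> w) = z \<otimes>\<^bsub>M\<^esub> z"
        using X zC wC by (simp add: G.m_comm)
      from two_cases[OF b1 b2 ne] X Y show ?thesis by (auto simp: fpq)
    qed
    from s1 s2 show ?thesis by (simp add: z_def)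
  qed
  define x1 where "x1 = q Ka \<one>\<^bsub>M\<^esub>"
  define y1 where "y1 = q Kb \<one>\<^bsub>M\<^esub>"
  have x1C: "x1 \<in> carrier M" using qC x1_def by simp
  have y1C: "y1 \<in> carrier M" using qC y1_def by simp
  have x1sq: "x1 \<otimes>\<^bsub>M\<^esub> x1 = \<one>\<^bsub>M\<^esub>" using sq[of Ka] x1_def by simp
  have y1sq: "y1 \<otimes>\<^bsub>M\<^esub> y1 = \<one>\<^bsub>M\<^esub>" using sq[of Kb] y1_def by simp
  have ix: "inv\<^bsub>M\<^esub> x1 = x1" using x1sq x1C G.inv_equality by blast
  have iy: "inv\<^bsub>M\<^esub> y1 = y1" using y1sq y1C G.inv_equality by blast
  have qc: "q Kc \<one>\<^bsub>M\<^esub> = x1 \<otimes>\<^bsub>M\<^esub> y1"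
  proof -
    have "f (Kc, \<one>\<^bsub>M\<^esub>) \<in> {(kmult (p Ka \<one>\<^bsub>M\<^esub>) (p Kb \<one>\<^bsub>M\<^esub>), inv\<^bsub>M\<^esub> x1 \<otimes>\<^bsub>M\<^esub> y1),
        (kmult (p Kb \<one>\<^bsub>M\<^esub>) (p Ka \<one>\<^bsub>M\<^esub>), inv\<^bsub>M\<^esub> y1 \<otimes>\<^bsub>M\<^esub> x1)}"
      using H[OF G.one_closed G.one_closed, of Ka Kb] pne[of Ka "\<one>\<^bsub>M\<^esub>"] pne[of Kb "\<one>\<^bsub>M\<^esub>"]
      by (simp add: x1_def y1_def)
    thus ?thesis using ix iy x1C y1C by (auto simp: fpq G.m_comm)
  qed
  have repr: "\<forall>A. f (A, \<one>\<^bsub>M\<^esub>) = (f' A, alpha M x1 y1 A)"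
  proof
    fix A show "f (A, \<one>\<^bsub>M\<^esub>) = (f' A, alpha M x1 y1 A)"
      using e qc by (cases A) (auto simp: fpq f'_def x1_def y1_def)
  qed
  have f'ne: "A \<noteq> K1 \<Longrightarrow> f' A \<noteq> K1" for A using pne f'_def by simp
  have injf': "inj f'"
  proof (rule injI)
    fix A B assume "f' A = f' B"
    hence "f' (kmult A B) = K1" using hom by simp
    hence "kmult A B = K1" using f'ne by blast
    thus "A = B" by (simp add: kmult_K1_iff)
  qed
  have finU: "finite (UNIV::klein set)" by (simp add: klein_UNIV)
  have "f' ` UNIV = UNIV"
    using endo_inj_surj[OF finU _ injf'] by blast
  hence "bij f'" using injf' by (simp add: bij_def)
  hence aut: "klein_aut f'" using hom by (simp add: klein_aut_def)
  show ?thesis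
  proof (rule ex1I[of _ f'])
    show "klein_aut f' \<and> (\<exists>x\<in>carrier M. \<exists>y\<in>carrier M. x \<otimes>\<^bsub>M\<^esub> x = \<one>\<^bsub>M\<^esub> \<and> y \<otimes>\<^bsub>M\<^esub> y = \<one>\<^bsub>M\<^esub> \<and>
              (\<forall>A. f (A, \<one>\<^bsub>M\<^esub>) = (f' A, alpha M x y A)))"
      using aut repr x1C y1C x1sq y1sq by blast
  next
    fix g assume "klein_aut g \<and> (\<exists>x\<in>carrier M. \<exists>y\<in>carrier M. x \<otimes>\<^bsub>M\<^esub> x = \<one>\<^bsub>M\<^esub> \<and> y \<otimes>\<^bsub>M\<^esub> y = \<one>\<^bsub>M\<^esub> \<and>
              (\<forall>A. f (A, \<one>\<^bsub>M\<^esub>) = (g A, alpha M x y A)))"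
    then obtain x y where "\<forall>A. f (A, \<one>\<^bsub>M\<^esub>) = (g A, alpha M x y A)" by blast
    thus "g = f'" using repr by (metis fst_conv ext)
  qed
qed

end
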